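(* Let $\Psi=\{\psi_i\}_{i\in I}$ be a lower frame sequence in a separable Hilbert space $\mathcal{H}$ with canonical dual $\widetilde\Psi=\{\widetilde\psi_i\}_{i\in I}$, and let $h\in\mathcal{H}$. Suppose $h$ is represented weakly by $\Psi$, i.e. there is a scalar sequence $\{c_i\}_{i\in I}$ such that $\langle h,g\rangle=\langle\sum_{i\in I}c_i\psi_i,g\rangle=\sum_{i\in I}c_i\langle\psi_i,g\rangle$ for all $g\in\mathcal{D}(C_\Psi)$. Then $$\sum_{i\in I}|c_i|^2=\sum_{i\in I}|\langle h,\widetilde\psi_i\rangle|^2+\sum_{i\in I}|c_i-\langle h,\widetilde\psi_i\rangle|^2.$$ In particular $\sum_i|c_i|^2\ge\sum_i|\langle h,\widetilde\psi_i\rangle|^2$.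
   Context: $I$ is countable. $\mathcal{D}(C_\Psi)=\{f\in\mathcal{H}:\{\langle f,\psi_i\rangle\}_i\in\ell^2\}$, $\mathcal{H}_\Psi:=\overline{\mathcal{D}(C_\Psi)}$, $\pi_{\mathcal{H}_\Psi}$ the orthogonal projection onto $\mathcal{H}_\Psi$. $\Psi$ is a lower frame sequence if there is $A>0$ with $A\|f\|^2\le\sum_i|\langle f,\psi_i\rangle|^2$ for all $f\in\mathcal{D}(C_\Psi)$. The generalized frame operator is $\Gamma_\Psi:=(C^r_\Psi)^*C^r_\Psi$, where $C^r_\Psi:\mathcal{D}(C_\Psi)\subseteq\mathcal{H}_\Psi\to\ell^2$, $C^r_\Psi f=\{\langle f,\psi_i\rangle\}_i$; for a lower frame sequence $\Gamma_\Psi:\mathcal{D}(\Gamma_\Psi)\to\mathcal{H}_\Psi$ is bijective with bounded inverse on $\mathcal{H}_\Psi$. The canonical dual is $\widetilde\psi_i:=\Gamma_\Psi^{-1}\pi_{\mathcal{H}_\Psi}\psi_i$. *)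

theory Defs
  imports "HOL-Analysis.Analysis"
begin

text \<open>HOL-Analysis only provides real inner product spaces, so we introduce complex
inner product spaces. The inner product is linear in the FIRST argument and
conjugate-linear in the second (mathematicians' convention, as in the paper:
the weak representation reads h = sum c_i psi_i). The norm is the one induced
by the inner product; a complex Hilbert space is a type of class
complex_inner and complete_space.\<close>

class complex_inner = real_normed_vector +
  fixes scaleC :: "complex \<Rightarrow> 'a \<Rightarrow> 'a" (infixr "*\<^sub>C" 75)
  fixes cinner :: "'a \<Rightarrow> 'a \<Rightarrow> complex"
  assumes scaleC_add_right: "a *\<^sub>C (x + y) = a *\<^sub>C x + a *\<^sub>C y"
    and scaleC_add_left: "(a + b) *\<^sub>C x = a *\<^sub>C x + b *\<^sub>C x"
    and scaleC_scaleC: "a *\<^sub>C (b *\<^sub>C x) = (a * b) *\<^sub>C x"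
    and scaleC_one: "1 *\<^sub>C x = x"
    and scaleR_scaleC: "scaleR r x = complex_of_real r *\<^sub>C x"
    and cinner_commute: "cinner x y = cnj (cinner y x)"
    and cinner_add_left: "cinner (x + y) z = cinner x z + cinner y z"
    and cinner_scaleC_left: "cinner (a *\<^sub>C x) y = a * cinner x y"
    and cinner_self_norm: "cinner x x = complex_of_real ((norm x)\<^sup>2)"

definition dom_C :: "'i set \<Rightarrow> ('i \<Rightarrow> 'a::complex_inner) \<Rightarrow> 'a set" where
  "dom_C I \<psi> = {f. (\<lambda>i. (cmod (cinner f (\<psi> i)))\<^sup>2) summable_on I}"

definition H_Psi :: "'i set \<Rightarrow> ('i \<Rightarrow> 'a::complex_inner) \<Rightarrow> 'a set" where
  "H_Psi I \<psi> = closure (dom_C I \<psi>)"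

definition lower_frame_seq :: "'i set \<Rightarrow> ('i \<Rightarrow> 'a::complex_inner) \<Rightarrow> bool" where
  "lower_frame_seq I \<psi> \<longleftrightarrow> (\<exists>A>0. \<forall>f\<in>dom_C I \<psi>.
      A * (norm f)\<^sup>2 \<le> (\<Sum>\<^sub>\<infinity>i\<in>I. (cmod (cinner f (\<psi> i)))\<^sup>2))"

definition l2 :: "'i set \<Rightarrow> ('i \<Rightarrow> complex) set" where
  "l2 I = {a. (\<lambda>i. (cmod (a i))\<^sup>2) summable_on I}"

definition l2_inner :: "'i set \<Rightarrow> ('i \<Rightarrow> complex) \<Rightarrow> ('i \<Rightarrow> complex) \<Rightarrow> complex" where
  "l2_inner I a b = (\<Sum>\<^sub>\<infinity>i\<in>I. a i * cnj (b i))"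

text \<open>Graph of the adjoint (C^r_Psi)^* of
  C^r_Psi : D(C_Psi) \<subseteq> H_Psi \<rightarrow> l^2(I):
  a is in its domain and (C^r_Psi)^* a = u iff u \<in> H_Psi and
  <C^r_Psi g, a>_{l^2} = <g, u> for all g in D(C_Psi).\<close>
definition adjC_rel :: "'i set \<Rightarrow> ('i \<Rightarrow> 'a::complex_inner) \<Rightarrow> ('i \<Rightarrow> complex) \<Rightarrow> 'a \<Rightarrow> bool" where
  "adjC_rel I \<psi> a u \<longleftrightarrow> a \<in> l2 I \<and> u \<in> H_Psi I \<psi> \<and>
     (\<forall>g\<in>dom_C I \<psi>. l2_inner I (\<lambda>i. cinner g (\<psi> i)) a = cinner g u)"

text \<open>Graph of the generalized frame operator Gamma_Psi = (C^r_Psi)^* C^r_Psi.\<close>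
definition gen_frame_op_rel :: "'i set \<Rightarrow> ('i \<Rightarrow> 'a::complex_inner) \<Rightarrow> 'a \<Rightarrow> 'a \<Rightarrow> bool" where
  "gen_frame_op_rel I \<psi> f u \<longleftrightarrow> f \<in> dom_C I \<psi> \<and> adjC_rel I \<psi> (\<lambda>i. cinner f (\<psi> i)) u"

definition orth_proj :: "'a::complex_inner set \<Rightarrow> 'a \<Rightarrow> 'a" where
  "orth_proj S x = (THE y. y \<in> S \<and> (\<forall>z\<in>S. cinner (x - y) z = 0))"

text \<open>Canonical dual: tilde psi_i = Gamma_Psi^{-1} (pi_{H_Psi} psi_i).\<close>
definition canonical_dual :: "'i set \<Rightarrow> ('i \<Rightarrow> 'a::complex_inner) \<Rightarrow> 'i \<Rightarrow> 'a" where
  "canonical_dual I \<psi> i = (THE f. gen_frame_op_rel I \<psi> f (orth_proj (H_Psi I \<psi>) (\<psi> i)))"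

end

theory Submission
  imports Defs
begin

lemma scaleC_zero_left[simp]: "(0::complex) *\<^sub>C (x::'a::complex_inner) = 0"
proof -
  have "(0::complex) *\<^sub>C x = (0 + 0) *\<^sub>C x" by simp
  also have "\<dots> = 0 *\<^sub>C x + 0 *\<^sub>C x" by (rule scaleC_add_left)
  finally show ?thesis by simp
qed

lemma scaleC_minus_left: "(- a) *\<^sub>C (x::'a::complex_inner) = - (a *\<^sub>C x)"
proof -
  have "(a + - a) *\<^sub>C x = a *\<^sub>C x + (- a) *\<^sub>C x" by (rule scaleC_add_left)
  then have "a *\<^sub>C x + (- a) *\<^sub>C x = 0" by simp
  then show ?thesis by (simp add: eq_neg_iff_add_eq_0 add.commute)
qed

lemma scaleC_minus1: "(- 1) *\<^sub>C (x::'a::complex_inner) = - x"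
  by (simp add: scaleC_minus_left scaleC_one)

lemma scaleC_diff_right: "a *\<^sub>C ((x::'a::complex_inner) - y) = a *\<^sub>C x - a *\<^sub>C y"
proof -
  have "a *\<^sub>C (x - y) + a *\<^sub>C y = a *\<^sub>C x" by (metis scaleC_add_right diff_add_cancel)
  then show ?thesis by (simp add: eq_diff_eq)
qed

lemma cinner_zero_left[simp]: "cinner 0 (y::'a::complex_inner) = 0"
proof -
  have "cinner (0 + 0) y = cinner 0 y + cinner 0 y" by (rule cinner_add_left)
  then show ?thesis by simp
qed

lemma cinner_minus_left: "cinner (- x) (y::'a::complex_inner) = - cinner x y"
proof -
  have "cinner (x + - x) y = cinner x y + cinner (-x) y" by (rule cinner_add_left)
  then show ?thesis by (simp add: eq_neg_iff_add_eq_0 add.commute)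
qed

lemma cinner_diff_left: "cinner (x - z) (y::'a::complex_inner) = cinner x y - cinner z y"
  using cinner_add_left[of x "-z" y] by (simp add: cinner_minus_left)

lemma cinner_add_right: "cinner x (y + z::'a::complex_inner) = cinner x y + cinner x z"
  by (metis cinner_commute cinner_add_left complex_cnj_add)

lemma cinner_scaleC_right: "cinner x (a *\<^sub>C (y::'a::complex_inner)) = cnj a * cinner x y"
  by (metis cinner_commute cinner_scaleC_left complex_cnj_mult)

lemma cinner_diff_right: "cinner x (y - z::'a::complex_inner) = cinner x y - cinner x z"
  by (metis cinner_commute cinner_diff_left complex_cnj_diff)

lemma cinner_zero_right[simp]: "cinner x (0::'a::complex_inner) = 0"
  by (metis cinner_commute cinner_zero_left complex_cnj_zero)

lemma Re_cinner_self: "Re (cinner x (x::'a::complex_inner)) = (norm x)^2"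
  by (simp add: cinner_self_norm)

lemma Im_cinner_self: "Im (cinner x (x::'a::complex_inner)) = 0"
  by (simp add: cinner_self_norm)

lemma cinner_self_zero: "cinner x (x::'a::complex_inner) = 0 \<longleftrightarrow> x = 0"
  by (simp add: cinner_self_norm)

lemma Re_cinner_swap: "Re (cinner x (y::'a::complex_inner)) = Re (cinner y x)"
  by (metis cinner_commute complex_cnj_cnj cnj.simps(1))

lemma cinner_bound2:
  fixes x y :: "'a::complex_inner"
  assumes "s > 0"
  shows "2 * Re (cinner y x) \<le> s * (norm y)^2 + (norm x)^2 / s"
proof -
  let ?a = "complex_of_real s"
  have "cinner (?a *\<^sub>C y - x) (?a *\<^sub>C y - x) =
      ?a * cnj ?a * cinner y y - ?a * cinner y x - cnj ?a * cinner x y + cinner x x"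
    by (simp add: cinner_diff_left cinner_diff_right cinner_scaleC_left cinner_scaleC_right algebra_simps)
  then have "0 \<le> Re (?a * cnj ?a * cinner y y - ?a * cinner y x - cnj ?a * cinner x y + cinner x x)"
    by (metis Re_cinner_self zero_le_power2)
  also have "\<dots> = s^2 * (norm y)^2 - 2 * s * Re (cinner y x) + (norm x)^2"
    using Re_cinner_swap[of x y] by (simp add: Re_cinner_self power2_eq_square)
  finally have "2 * s * Re (cinner y x) \<le> s^2 * (norm y)^2 + (norm x)^2" by simp
  then show ?thesis using assms by (simp add: field_simps power2_eq_square)
qed

lemma norm_scaleC_sq: "(norm (a *\<^sub>C (p::'a::complex_inner)))^2 = (cmod a)^2 * (norm p)^2"
proof -
  have "(norm (a *\<^sub>C p))^2 = Re (cinner (a *\<^sub>C p) (a *\<^sub>C p))" by (simp add: Re_cinner_self)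
  also have "\<dots> = Re (a * cnj a * cinner p p)"
    by (simp add: cinner_scaleC_left cinner_scaleC_right algebra_simps)
  also have "\<dots> = (cmod a)^2 * (norm p)^2"
    using cmod_power2[of a] by (simp add: cinner_self_norm complex_mult_cnj del: of_real_power)
  finally show ?thesis .
qed

lemma cinner_bound:
  fixes z p :: "'a::complex_inner"
  shows "(cmod (cinner z p))^2 \<le> ((norm p)^2 + 1) * (norm z)^2"
proof -
  let ?w = "cinner z p"
  let ?s = "(norm p)^2 + 1"
  have s: "?s > 0" by (simp add: add_nonneg_pos)
  have "2 * Re (cinner z (?w *\<^sub>C p)) \<le> ?s * (norm z)^2 + (norm (?w *\<^sub>C p))^2 / ?s"
    by (rule cinner_bound2[OF s])
  moreover have "Re (cinner z (?w *\<^sub>C p)) = (cmod ?w)^2"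
    using cmod_power2[of ?w] by (simp add: cinner_scaleC_right power2_eq_square)
  moreover have "(norm (?w *\<^sub>C p))^2 / ?s \<le> (cmod ?w)^2"
  proof -
    have "(norm (?w *\<^sub>C p))^2 = (cmod ?w)^2 * (norm p)^2" by (rule norm_scaleC_sq)
    also have "\<dots> \<le> (cmod ?w)^2 * ?s" by (simp add: mult_left_mono)
    finally show ?thesis using s by (simp add: divide_le_eq)
  qed
  ultimately show ?thesis by linarith
qed


lemma abstract_riesz:
  fixes S :: "'a::complex_inner set" and B :: "'a \<Rightarrow> 'a \<Rightarrow> complex" and x :: 'a and A :: real
  assumes Sadd: "\<And>u v. u\<in>S \<Longrightarrow> v\<in>S \<Longrightarrow> u+v \<in> S"
    and Sscale: "\<And>a u. u\<in>S \<Longrightarrow> a *\<^sub>C u \<in> S"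
    and Sne: "S \<noteq> {}"
    and Badd: "\<And>u v w. u\<in>S \<Longrightarrow> v\<in>S \<Longrightarrow> w\<in>S \<Longrightarrow> B (u+v) w = B u w + B v w"
    and Bscale: "\<And>a u w. u\<in>S \<Longrightarrow> w\<in>S \<Longrightarrow> B (a *\<^sub>C u) w = a * B u w"
    and Bherm: "\<And>u w. u\<in>S \<Longrightarrow> w\<in>S \<Longrightarrow> B u w = cnj (B w u)"
    and Apos: "A > 0" and coer: "\<And>u. u\<in>S \<Longrightarrow> A * (norm u)^2 \<le> Re (B u u)"
    and compl: "\<And>y. (\<And>n. y n \<in> S) \<Longrightarrow>
        (\<And>e. e>0 \<Longrightarrow> \<exists>N. \<forall>m\<ge>N. \<forall>n\<ge>N. Re (B (y m - y n) (y m - y n)) < e) \<Longrightarrow>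
        \<exists>z\<in>S. (\<lambda>n. Re (B (y n - z) (y n - z))) \<longlonglongrightarrow> 0"
  shows "\<exists>z\<in>S. \<forall>v\<in>S. B v z = cinner v x"
proof -
  define Q where "Q u = Re (B u u)" for u
  define \<Phi> where "\<Phi> u = Q u - 2 * Re (cinner u x)" for u
  have Sneg: "- u \<in> S" if "u\<in>S" for u using Sscale[OF that, of "-1"] by (simp add: scaleC_minus1)
  have Sdiff: "u - v \<in> S" if "u\<in>S" "v\<in>S" for u v using Sadd[OF that(1) Sneg[OF that(2)]] by simp
  have Bradd: "B w (u+v) = B w u + B w v" if "u\<in>S" "v\<in>S" "w\<in>S" for u v w
    using that by (metis Bherm Badd Sadd complex_cnj_add)
  have Brscale: "B w (a *\<^sub>C u) = cnj a * B w u" if "u\<in>S" "w\<in>S" for a u w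
    using that by (metis Bherm Bscale Sscale complex_cnj_mult)
  have Bneg: "B (- u) w = - B u w" if "u\<in>S" "w\<in>S" for u w
    using Bscale[OF that, of "-1"] by (simp add: scaleC_minus1)
  have Brneg: "B w (- u) = - B w u" if "u\<in>S" "w\<in>S" for u w
    using Brscale[OF that, of "-1"] by (simp add: scaleC_minus1)
  have Qnn: "Q u \<ge> 0" if "u\<in>S" for u
    using coer[OF that] Apos unfolding Q_def by (meson mult_nonneg_nonneg order.trans less_imp_le zero_le_power2)
  have Qadd: "Q (u+v) = Q u + Q v + 2 * Re (B u v)" if "u\<in>S" "v\<in>S" for u v
  proof -
    have "B (u+v) (u+v) = B u u + B u v + (B v u + B v v)"
      using that by (simp add: Badd Bradd Sadd)
    moreover have "Re (B v u) = Re (B u v)" using Bherm[OF that] by simp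
    ultimately show ?thesis unfolding Q_def by simp
  qed
  have Qscale: "Q (a *\<^sub>C u) = (cmod a)^2 * Q u" if "u\<in>S" for a u
  proof -
    have "B (a *\<^sub>C u) (a *\<^sub>C u) = (a * cnj a) * B u u"
      using that by (simp add: Bscale Brscale Sscale mult.assoc)
    then show ?thesis unfolding Q_def using cmod_power2[of a] by (simp add: complex_mult_cnj del: of_real_power)
  qed
  have Qneg: "Q (- u) = Q u" if "u\<in>S" for u
    using Qscale[OF that, of "-1"] by (simp add: scaleC_minus1)
  have Qdiff: "Q (u - v) = Q u + Q v - 2 * Re (B u v)" if "u\<in>S" "v\<in>S" for u v
    using Qadd[OF that(1) Sneg[OF that(2)]] Qneg[OF that(2)] Brneg[OF that(2) that(1)] by simp
  have Bbound: "2 * Re (B u v) \<le> s * Q u + Q v / s" if "u\<in>S" "v\<in>S" "s > 0" for u v s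
  proof -
    have su: "complex_of_real s *\<^sub>C u \<in> S" using Sscale that by simp
    have "0 \<le> Q (complex_of_real s *\<^sub>C u - v)" using Qnn Sdiff su that by simp
    also have "\<dots> = s^2 * Q u + Q v - 2 * s * Re (B u v)"
      using Qdiff[OF su that(2)] Qscale[OF that(1), of "complex_of_real s"] Bscale[OF that(1,2)]
      by simp
    finally have "2 * s * Re (B u v) \<le> s^2 * Q u + Q v" by simp
    then show ?thesis using that(3) by (simp add: field_simps power2_eq_square)
  qed
  have Phi_add: "\<Phi> (u+e) = \<Phi> u + Q e + 2 * Re (B u e) - 2 * Re (cinner e x)" if "u\<in>S" "e\<in>S" for u e
    unfolding \<Phi>_def using Qadd[OF that] by (simp add: cinner_add_left)
  have Phi_lb: "\<Phi> u \<ge> 0 - (norm x)^2 / A" if "u\<in>S" for u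
  proof -
    have "2 * Re (cinner u x) \<le> A * (norm u)^2 + (norm x)^2 / A" by (rule cinner_bound2[OF Apos])
    then show ?thesis using coer[OF that] unfolding \<Phi>_def Q_def by simp
  qed
  define m where "m = Inf (\<Phi> ` S)"
  have bdd: "bdd_below (\<Phi> ` S)" by (rule bdd_belowI2[where m="0 - (norm x)^2 / A"]) (rule Phi_lb)
  have m_le: "m \<le> \<Phi> u" if "u\<in>S" for u unfolding m_def using bdd that by (simp add: cInf_lower)
  have "\<forall>n. \<exists>y. y\<in>S \<and> \<Phi> y < m + 1/(Suc n)"
  proof
    fix n
    have "Inf (\<Phi> ` S) < m + 1/(Suc n)" unfolding m_def by simp
    then obtain t where "t \<in> \<Phi> ` S" "t < m + 1/(Suc n)" using cInf_lessD[of "\<Phi> ` S"] Sne by blast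
    then show "\<exists>y. y\<in>S \<and> \<Phi> y < m + 1/(Suc n)" by blast
  qed
  then have "\<exists>y. \<forall>n. y n \<in> S \<and> \<Phi> (y n) < m + 1/(Suc n)" by (rule choice)
  then obtain y where yy: "\<forall>n. y n \<in> S \<and> \<Phi> (y n) < m + 1/(Suc n)" by blast
  have yS: "\<And>n. y n \<in> S" and yPhi: "\<And>n. \<Phi> (y n) < m + 1/(Suc n)" using yy by auto
  have para: "Q (u - v) = 2 * \<Phi> u + 2 * \<Phi> v - 4 * \<Phi> ((1/2) *\<^sub>C (u+v))" if "u\<in>S" "v\<in>S" for u v
  proof -
    have uv: "u + v \<in> S" using Sadd that by simp
    have "Q ((1/2) *\<^sub>C (u+v)) = (Q u + Q v + 2 * Re (B u v)) / 4"
      using Qscale[OF uv, of "1/2"] Qadd[OF that] by (simp add: power2_eq_square)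
    moreover have "Re (cinner ((1/2) *\<^sub>C (u+v)) x) = (Re (cinner u x) + Re (cinner v x)) / 2"
      by (simp add: cinner_scaleC_left cinner_add_left)
    ultimately show ?thesis unfolding \<Phi>_def using Qdiff[OF that] by (simp add: field_simps)
  qed
  have cauchy: "\<exists>N. \<forall>a\<ge>N. \<forall>b\<ge>N. Q (y a - y b) < e" if "e > 0" for e
  proof -
    have e4: "e / 4 > 0" using that by simp
    obtain N where N: "inverse (real (Suc N)) < e / 4" using reals_Archimedean[OF e4] by blast
    have "Q (y a - y b) < e" if "a \<ge> N" "b \<ge> N" for a b
    proof -
      have mid: "(1/2) *\<^sub>C (y a + y b) \<in> S" using Sscale Sadd yS by simp
      have "Q (y a - y b) = 2 * \<Phi> (y a) + 2 * \<Phi> (y b) - 4 * \<Phi> ((1/2) *\<^sub>C (y a + y b))"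
        using para yS by simp
      also have "\<dots> < 2 * (m + 1/(Suc a)) + 2 * (m + 1/(Suc b)) - 4 * m"
        using yPhi[of a] yPhi[of b] m_le[OF mid] by argo
      also have "\<dots> \<le> 4 * inverse (real (Suc N))"
      proof -
        have "1/(Suc a) \<le> inverse (real (Suc N))" "1/(Suc b) \<le> inverse (real (Suc N))"
          using that by (simp_all add: divide_inverse le_imp_inverse_le)
        then show ?thesis by argo
      qed
      also have "\<dots> < e" using N by simp
      finally show ?thesis .
    qed
    then show ?thesis by blast
  qed
  have "\<exists>z\<in>S. (\<lambda>n. Re (B (y n - z) (y n - z))) \<longlonglongrightarrow> 0"
  proof (rule compl[OF yS])
    fix e :: real assume "e > 0"
    from cauchy[OF this] show "\<exists>N. \<forall>m\<ge>N. \<forall>n\<ge>N. Re (B (y m - y n) (y m - y n)) < e"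
      by (simp add: Q_def)
  qed
  then obtain z where zS: "z \<in> S" and zlim0: "(\<lambda>n. Re (B (y n - z) (y n - z))) \<longlonglongrightarrow> 0"
    by blast
  have zlim: "(\<lambda>n. Q (y n - z)) \<longlonglongrightarrow> 0" using zlim0 by (simp add: Q_def)
  have Phi_z: "\<Phi> z \<le> m"
  proof (rule field_le_epsilon)
    fix \<epsilon> :: real assume eps: "\<epsilon> > 0"
    define s where "s = \<epsilon> / (4 * (Q z + 1))"
    define t where "t = 4 * ((norm x)^2 + 1) / \<epsilon>"
    define K where "K = 1 / s + t / A"
    have s: "s > 0" unfolding s_def using eps Qnn[OF zS] by simp
    have t: "t > 0" unfolding t_def using eps by (simp add: add_nonneg_pos)
    have K: "K > 0" unfolding K_def using s t Apos by (intro add_pos_pos divide_pos_pos) auto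
    have sQz: "s * Q z \<le> \<epsilon> / 4"
    proof -
      have n1: "Q z + 1 > 0" using Qnn[OF zS] by simp
      have "s * Q z = \<epsilon> * Q z / (4 * (Q z + 1))" unfolding s_def by simp
      also have "\<dots> \<le> \<epsilon> * (Q z + 1) / (4 * (Q z + 1))"
        using eps n1 by (intro divide_right_mono mult_left_mono) auto
      also have "\<dots> = \<epsilon> / 4" using n1 by (intro nonzero_mult_divide_mult_cancel_right) simp
      finally show ?thesis .
    qed
    have xt: "(norm x)^2 / t \<le> \<epsilon> / 4"
    proof -
      have n1: "(norm x)^2 + 1 > 0" by (simp add: add_nonneg_pos)
      have "(norm x)^2 / t = \<epsilon> * (norm x)^2 / (4 * ((norm x)^2 + 1))" unfolding t_def by simp
      also have "\<dots> \<le> \<epsilon> * ((norm x)^2 + 1) / (4 * ((norm x)^2 + 1))"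
        using eps n1 by (intro divide_right_mono mult_left_mono) auto
      also have "\<dots> = \<epsilon> / 4" using n1 by (intro nonzero_mult_divide_mult_cancel_right) simp
      finally show ?thesis .
    qed
    have ev: "eventually (\<lambda>n. Q (y n - z) < \<epsilon> / (4 * K)) sequentially"
      using zlim eps K by (simp add: order_tendstoD(2))
    have ev2: "eventually (\<lambda>n. 1 / real (Suc n) < \<epsilon> / 4) sequentially"
    proof -
      have e4: "\<epsilon> / 4 > 0" using eps by simp
      obtain N where N: "inverse (real (Suc N)) < \<epsilon> / 4" using reals_Archimedean[OF e4] by blast
      have "1 / real (Suc n) < \<epsilon> / 4" if "n \<ge> N" for n
      proof -
        have "1 / real (Suc n) \<le> inverse (real (Suc N))"
          using that by (simp add: divide_inverse le_imp_inverse_le)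
        then show ?thesis using N by argo
      qed
      then show ?thesis by (auto simp: eventually_sequentially)
    qed
    obtain n where n1: "Q (y n - z) < \<epsilon> / (4 * K)" and n2: "1 / real (Suc n) < \<epsilon> / 4"
      using eventually_happens'[OF sequentially_bot eventually_conj[OF ev ev2]] by blast
    define d where "d = y n - z"
    have dS: "d \<in> S" unfolding d_def using Sdiff yS zS by simp
    have yd: "y n = z + d" unfolding d_def by simp
    have "\<Phi> (y n) = \<Phi> z + Q d + 2 * Re (B z d) - 2 * Re (cinner d x)"
      using Phi_add[OF zS dS] yd by simp
    then have eq: "\<Phi> z = \<Phi> (y n) - Q d + 2 * Re (B z (- d)) + 2 * Re (cinner d x)"
      using Brneg[OF dS zS] by simp
    have b1: "2 * Re (B z (- d)) \<le> s * Q z + Q d / s"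
      using Bbound[OF zS Sneg[OF dS] s] Qneg[OF dS] by simp
    have b2: "2 * Re (cinner d x) \<le> t * Q d / A + (norm x)^2 / t"
    proof -
      have "2 * Re (cinner d x) \<le> t * (norm d)^2 + (norm x)^2 / t" by (rule cinner_bound2[OF t])
      moreover have "t * (norm d)^2 \<le> t * Q d / A"
        using coer[OF dS] Apos t unfolding Q_def by (simp add: field_simps)
      ultimately show ?thesis by linarith
    qed
    have Qd: "Q d \<ge> 0" using Qnn[OF dS] .
    have "K * Q d < \<epsilon> / 4"
      using n1 K unfolding d_def by (simp add: field_simps)
    moreover have "Q d / s + t * Q d / A = K * Q d" unfolding K_def by (simp add: field_simps)
    ultimately show "\<Phi> z \<le> m + \<epsilon>"
      using eq b1 b2 sQz xt yPhi[of n] n2 Qd by linarith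
  qed
  have "B v z = cinner v x" if vS: "v \<in> S" for v
  proof -
    define w where "w = B v z - cinner v x"
    define s where "s = 1 / (Q v + 1)"
    define a where "a = - (complex_of_real s * cnj w)"
    have s: "s > 0" unfolding s_def using Qnn[OF vS] by simp
    have sQ: "s * Q v < 1" unfolding s_def using Qnn[OF vS] by (simp add: field_simps)
    have avS: "a *\<^sub>C v \<in> S" using Sscale vS by simp
    have "\<Phi> z \<le> \<Phi> (z + a *\<^sub>C v)" using Phi_z m_le[OF Sadd[OF zS avS]] by linarith
    also have "\<Phi> (z + a *\<^sub>C v) = \<Phi> z + (cmod a)^2 * Q v + 2 * Re (a * w)"
    proof -
      have "\<Phi> (z + a *\<^sub>C v) = \<Phi> z + Q (a *\<^sub>C v) + 2 * Re (B z (a *\<^sub>C v)) - 2 * Re (cinner (a *\<^sub>C v) x)"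
        by (rule Phi_add[OF zS avS])
      moreover have "Re (B z (a *\<^sub>C v)) = Re (a * B v z)"
        using Brscale[OF vS zS, of a] Bherm[OF zS vS] by simp
      ultimately show ?thesis using Qscale[OF vS, of a] unfolding w_def
        by (simp add: cinner_scaleC_left algebra_simps)
    qed
    finally have ineq: "0 \<le> (cmod a)^2 * Q v + 2 * Re (a * w)" by simp
    have "(cmod a)^2 = s^2 * (cmod w)^2" unfolding a_def using s
      by (simp add: norm_mult power_mult_distrib)
    moreover have "Re (a * w) = - s * (cmod w)^2" unfolding a_def
      using cmod_power2[of w] by (simp add: power2_eq_square algebra_simps)
    ultimately have "0 \<le> s * (cmod w)^2 * (s * Q v - 2)"
      using ineq by (simp add: algebra_simps power2_eq_square)
    moreover have neg: "s * Q v - 2 < 0" using sQ by simp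
    moreover have "s * (cmod w)^2 \<ge> 0" using s by simp
    ultimately have "s * (cmod w)^2 * (s * Q v - 2) = 0"
      by (meson mult_nonneg_nonpos less_imp_le antisym)
    then have "s * (cmod w)^2 = 0" using neg by simp
    then have "w = 0" using s by simp
    then show ?thesis unfolding w_def by simp
  qed
  then show ?thesis using zS by blast
qed


lemma norm_scaleC: "norm (a *\<^sub>C (p::'a::complex_inner)) = cmod a * norm p"
proof -
  have "(norm (a *\<^sub>C p))^2 = (cmod a * norm p)^2" by (simp add: norm_scaleC_sq power_mult_distrib)
  then show ?thesis by (rule power2_eq_imp_eq) simp_all
qed

lemma cmod_add_sq: "(cmod (a + b))^2 \<le> 2 * (cmod a)^2 + 2 * (cmod b)^2"
proof -
  have "cmod (a + b) \<le> cmod a + cmod b" by (rule norm_triangle_ineq)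
  then have "(cmod (a + b))^2 \<le> (cmod a + cmod b)^2" by (simp add: power_mono)
  also have "\<dots> \<le> 2 * (cmod a)^2 + 2 * (cmod b)^2"
    using sum_squares_bound[of "cmod a" "cmod b"] by (simp add: power2_eq_square algebra_simps)
  finally show ?thesis .
qed

lemma cmod_mult_cnj_le: "cmod (a * cnj b) \<le> ((cmod a)^2 + (cmod b)^2) / 2"
proof -
  have "0 \<le> (cmod a - cmod b)^2" by simp
  then show ?thesis by (simp add: norm_mult power2_eq_square algebra_simps)
qed

lemma cinner_tendsto_left:
  fixes X :: "nat \<Rightarrow> 'a::complex_inner"
  assumes "X \<longlonglongrightarrow> z"
  shows "(\<lambda>m. cinner (X m) p) \<longlonglongrightarrow> cinner z p"
proof -
  let ?K = "sqrt ((norm p)^2 + 1)"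
  have "(\<lambda>m. norm (X m - z)) \<longlonglongrightarrow> 0"
    using assms tendsto_norm_zero LIM_zero by blast
  then have lim0: "(\<lambda>m. ?K * norm (X m - z)) \<longlonglongrightarrow> 0"
    by (rule tendsto_mult_right_zero)
  have "norm (cinner (X m) p - cinner z p) \<le> ?K * norm (X m - z)" for m
  proof -
    have "(cmod (cinner (X m - z) p))^2 \<le> ((norm p)^2 + 1) * (norm (X m - z))^2"
      by (rule cinner_bound)
    also have "\<dots> = (?K * norm (X m - z))^2"
      by (simp add: power_mult_distrib add_nonneg_nonneg)
    finally have "(cmod (cinner (X m - z) p))^2 \<le> (?K * norm (X m - z))^2" .
    then have "cmod (cinner (X m - z) p) \<le> ?K * norm (X m - z)"
      by (rule power2_le_imp_le) simp
    then show ?thesis by (simp add: cinner_diff_left)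
  qed
  then have "(\<lambda>m. cinner (X m) p - cinner z p) \<longlonglongrightarrow> 0"
    by (intro Lim_null_comparison[OF _ lim0]) auto
  then show ?thesis by (simp add: LIM_zero_iff)
qed

lemma scaleC_tendsto:
  fixes X :: "nat \<Rightarrow> 'a::complex_inner"
  assumes "X \<longlonglongrightarrow> z"
  shows "(\<lambda>m. a *\<^sub>C X m) \<longlonglongrightarrow> a *\<^sub>C z"
proof -
  have "(\<lambda>m. norm (X m - z)) \<longlonglongrightarrow> 0"
    using assms tendsto_norm_zero LIM_zero by blast
  then have lim0: "(\<lambda>m. cmod a * norm (X m - z)) \<longlonglongrightarrow> 0"
    by (rule tendsto_mult_right_zero)
  have "norm (a *\<^sub>C X m - a *\<^sub>C z) \<le> cmod a * norm (X m - z)" for m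
    by (simp add: scaleC_diff_right[symmetric] norm_scaleC)
  then have "(\<lambda>m. a *\<^sub>C X m - a *\<^sub>C z) \<longlonglongrightarrow> 0"
    by (intro Lim_null_comparison[OF _ lim0]) auto
  then show ?thesis by (simp add: LIM_zero_iff)
qed

lemma dom_C_add: "f \<in> dom_C I \<psi> \<Longrightarrow> g \<in> dom_C I \<psi> \<Longrightarrow> f + g \<in> dom_C I \<psi>"
  unfolding dom_C_def
proof (clarsimp)
  assume f: "(\<lambda>i. (cmod (cinner f (\<psi> i)))\<^sup>2) summable_on I"
    and g: "(\<lambda>i. (cmod (cinner g (\<psi> i)))\<^sup>2) summable_on I"
  have s: "(\<lambda>i. 2 * (cmod (cinner f (\<psi> i)))\<^sup>2 + 2 * (cmod (cinner g (\<psi> i)))\<^sup>2) summable_on I"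
    by (intro summable_on_add summable_on_cmult_right f g)
  show "(\<lambda>i. (cmod (cinner (f + g) (\<psi> i)))\<^sup>2) summable_on I"
    by (rule summable_on_comparison_test[OF s]) (auto simp: cinner_add_left cmod_add_sq)
qed

lemma dom_C_scale: "f \<in> dom_C I \<psi> \<Longrightarrow> a *\<^sub>C f \<in> dom_C I \<psi>"
  unfolding dom_C_def
  by (simp add: cinner_scaleC_left norm_mult power_mult_distrib summable_on_cmult_right)

lemma dom_C_zero: "0 \<in> dom_C I \<psi>"
  unfolding dom_C_def by simp

lemma dom_C_diff: "f \<in> dom_C I \<psi> \<Longrightarrow> g \<in> dom_C I \<psi> \<Longrightarrow> f - g \<in> dom_C I \<psi>"
  using dom_C_add[of f I \<psi> "(-1) *\<^sub>C g"] dom_C_scale[of g I \<psi> "-1"] by (simp add: scaleC_minus1)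

definition BB :: "'i set \<Rightarrow> ('i \<Rightarrow> 'a::complex_inner) \<Rightarrow> 'a \<Rightarrow> 'a \<Rightarrow> complex" where
  "BB I \<psi> f g = (\<Sum>\<^sub>\<infinity>i\<in>I. cinner f (\<psi> i) * cnj (cinner g (\<psi> i)))"

lemma prod_summable:
  assumes "f \<in> dom_C I \<psi>" "g \<in> dom_C I \<psi>"
  shows "(\<lambda>i. cinner f (\<psi> i) * cnj (cinner g (\<psi> i))) summable_on I"
proof -
  have s: "(\<lambda>i. ((cmod (cinner f (\<psi> i)))\<^sup>2 + (cmod (cinner g (\<psi> i)))\<^sup>2) / 2) summable_on I"
  proof -
    have "(\<lambda>i. (1/2) * ((cmod (cinner f (\<psi> i)))\<^sup>2 + (cmod (cinner g (\<psi> i)))\<^sup>2)) summable_on I"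
      using assms unfolding dom_C_def by (intro summable_on_cmult_right summable_on_add) auto
    then show ?thesis by simp
  qed
  have "(\<lambda>i. norm (cinner f (\<psi> i) * cnj (cinner g (\<psi> i)))) summable_on I"
    by (rule summable_on_comparison_test[OF s]) (simp_all only: cmod_mult_cnj_le norm_ge_zero)
  then show ?thesis using summable_on_iff_abs_summable_on_complex by blast
qed

lemma BB_self: "f \<in> dom_C I \<psi> \<Longrightarrow> BB I \<psi> f f = complex_of_real (\<Sum>\<^sub>\<infinity>i\<in>I. (cmod (cinner f (\<psi> i)))\<^sup>2)"
proof -
  assume f: "f \<in> dom_C I \<psi>"
  have "BB I \<psi> f f = (\<Sum>\<^sub>\<infinity>i\<in>I. complex_of_real ((cmod (cinner f (\<psi> i)))\<^sup>2))"
    unfolding BB_def by (simp only: complex_norm_square)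
  also have "\<dots> = complex_of_real (\<Sum>\<^sub>\<infinity>i\<in>I. (cmod (cinner f (\<psi> i)))\<^sup>2)"
    using f unfolding dom_C_def
    by (intro infsumI has_sum_of_real has_sum_infsum) simp
  finally show ?thesis .
qed

lemma Re_BB_self: "f \<in> dom_C I \<psi> \<Longrightarrow> Re (BB I \<psi> f f) = (\<Sum>\<^sub>\<infinity>i\<in>I. (cmod (cinner f (\<psi> i)))\<^sup>2)"
  by (simp add: BB_self)

lemma BB_add: "u \<in> dom_C I \<psi> \<Longrightarrow> v \<in> dom_C I \<psi> \<Longrightarrow> w \<in> dom_C I \<psi> \<Longrightarrow>
   BB I \<psi> (u + v) w = BB I \<psi> u w + BB I \<psi> v w"
  unfolding BB_def by (simp add: cinner_add_left distrib_right infsum_add prod_summable)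

lemma BB_scale: "u \<in> dom_C I \<psi> \<Longrightarrow> w \<in> dom_C I \<psi> \<Longrightarrow>
   BB I \<psi> (a *\<^sub>C u) w = a * BB I \<psi> u w"
  unfolding BB_def by (simp add: cinner_scaleC_left mult.assoc infsum_cmult_right prod_summable)

lemma BB_herm: "BB I \<psi> u w = cnj (BB I \<psi> w u)"
  unfolding BB_def by (simp flip: infsum_cnj add: mult.commute)


lemma dom_C_complete:
  fixes \<psi> :: "'i \<Rightarrow> 'a::{complex_inner,complete_space}"
  assumes A: "A > 0"
    and lb: "\<And>f. f \<in> dom_C I \<psi> \<Longrightarrow> A * (norm f)^2 \<le> (\<Sum>\<^sub>\<infinity>i\<in>I. (cmod (cinner f (\<psi> i)))^2)"
    and yS: "\<And>n. y n \<in> dom_C I \<psi>"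
    and cau: "\<And>e. e>0 \<Longrightarrow> \<exists>N. \<forall>m\<ge>N. \<forall>n\<ge>N. Re (BB I \<psi> (y m - y n) (y m - y n)) < e"
  shows "\<exists>z\<in>dom_C I \<psi>. (\<lambda>n. Re (BB I \<psi> (y n - z) (y n - z))) \<longlonglongrightarrow> 0"
proof -
  define q where "q u = (\<Sum>\<^sub>\<infinity>i\<in>I. (cmod (cinner u (\<psi> i)))^2)" for u
  have qnn: "q u \<ge> 0" for u unfolding q_def by (rule infsum_nonneg) simp
  have cau': "\<exists>N. \<forall>m\<ge>N. \<forall>n\<ge>N. q (y m - y n) < e" if "e>0" for e
    using cau[OF that] by (simp add: Re_BB_self dom_C_diff yS q_def)
  have "Cauchy y"
  proof (rule metric_CauchyI)
    fix e :: real assume e: "e > 0"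
    have Ae: "A * e^2 > 0" using A e by simp
    obtain N where N: "\<forall>m\<ge>N. \<forall>n\<ge>N. q (y m - y n) < A * e^2" using cau'[OF Ae] by blast
    show "\<exists>M. \<forall>m\<ge>M. \<forall>n\<ge>M. dist (y m) (y n) < e"
    proof (intro exI allI impI)
      fix m n assume mn: "m \<ge> N" "n \<ge> N"
      have "A * (norm (y m - y n))^2 \<le> q (y m - y n)"
        unfolding q_def by (rule lb[OF dom_C_diff[OF yS yS]])
      also have "\<dots> < A * e^2" using N mn by blast
      finally have "(norm (y m - y n))^2 < e^2" using A by simp
      then have "norm (y m - y n) < e" by (rule power_less_imp_less_base) (use e in simp)
      then show "dist (y m) (y n) < e" by (simp add: dist_norm)
    qed
  qed
  then obtain z where yz: "y \<longlonglongrightarrow> z" using Cauchy_convergent_iff convergent_def by blast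
  have key: "\<exists>N. \<forall>n\<ge>N. y n - z \<in> dom_C I \<psi> \<and> q (y n - z) \<le> e" if e: "e > 0" for e
  proof -
    obtain N where N: "\<forall>m\<ge>N. \<forall>n\<ge>N. q (y m - y n) < e" using cau'[OF e] by blast
    have "y n - z \<in> dom_C I \<psi> \<and> q (y n - z) \<le> e" if n: "n \<ge> N" for n
    proof -
      have fin: "sum (\<lambda>i. (cmod (cinner (y n - z) (\<psi> i)))^2) F \<le> e" if F: "finite F" "F \<subseteq> I" for F
      proof -
        have lim: "(\<lambda>m. sum (\<lambda>i. (cmod (cinner (y n - y m) (\<psi> i)))^2) F)
            \<longlonglongrightarrow> sum (\<lambda>i. (cmod (cinner (y n - z) (\<psi> i)))^2) F"
          by (intro tendsto_sum tendsto_power tendsto_norm cinner_tendsto_left tendsto_diff tendsto_const yz)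
        have "sum (\<lambda>i. (cmod (cinner (y n - y m) (\<psi> i)))^2) F \<le> e" if m: "m \<ge> N" for m
        proof -
          have "sum (\<lambda>i. (cmod (cinner (y n - y m) (\<psi> i)))^2) F \<le> q (y n - y m)"
            unfolding q_def using dom_C_diff[OF yS yS, of n m] F
            by (intro finite_sum_le_infsum) (auto simp: dom_C_def)
          also have "\<dots> < e" using N n m by blast
          finally show ?thesis by simp
        qed
        then show ?thesis by (intro LIMSEQ_le_const2[OF lim]) blast
      qed
      have summ: "(\<lambda>i. (cmod (cinner (y n - z) (\<psi> i)))^2) summable_on I"
        by (rule nonneg_bdd_above_summable_on) (auto intro!: bdd_aboveI2[where M=e] fin)
      have "q (y n - z) \<le> e" unfolding q_def by (rule infsum_le_finite_sums[OF summ fin])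
      with summ show ?thesis by (simp add: dom_C_def)
    qed
    then show ?thesis by blast
  qed
  obtain N1 where N1: "y N1 - z \<in> dom_C I \<psi>" using key[of 1] by auto
  have zD: "z \<in> dom_C I \<psi>" using dom_C_diff[OF yS N1, of N1] by simp
  have "(\<lambda>n. Re (BB I \<psi> (y n - z) (y n - z))) \<longlonglongrightarrow> 0"
  proof (rule LIMSEQ_I)
    fix r :: real assume r: "r > 0"
    obtain N where N: "\<forall>n\<ge>N. y n - z \<in> dom_C I \<psi> \<and> q (y n - z) \<le> r / 2"
      using key[of "r/2"] r by auto
    have "norm (Re (BB I \<psi> (y n - z) (y n - z)) - 0) < r" if "n \<ge> N" for n
    proof -
      have "Re (BB I \<psi> (y n - z) (y n - z)) = q (y n - z)"
        using N that by (simp add: Re_BB_self q_def)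
      then show ?thesis using N that qnn[of "y n - z"] r by auto
    qed
    then show "\<exists>no. \<forall>n\<ge>no. norm (Re (BB I \<psi> (y n - z) (y n - z)) - 0) < r" by blast
  qed
  with zD show ?thesis by blast
qed

lemma H_Psi_add:
  assumes "u \<in> H_Psi I \<psi>" "v \<in> H_Psi I \<psi>"
  shows "u + v \<in> H_Psi I \<psi>"
proof -
  obtain a where a: "\<forall>n. a n \<in> dom_C I \<psi>" "a \<longlonglongrightarrow> u" using assms(1) unfolding H_Psi_def closure_sequential by blast
  obtain b where b: "\<forall>n. b n \<in> dom_C I \<psi>" "b \<longlonglongrightarrow> v" using assms(2) unfolding H_Psi_def closure_sequential by blast
  have "\<forall>n. a n + b n \<in> dom_C I \<psi>" using a b dom_C_add by blast
  moreover have "(\<lambda>n. a n + b n) \<longlonglongrightarrow> u + v" using a b by (intro tendsto_add) auto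
  ultimately show ?thesis unfolding H_Psi_def closure_sequential
    by (intro exI[where x="\<lambda>n. a n + b n"]) simp
qed

lemma H_Psi_scale:
  assumes "u \<in> H_Psi I \<psi>"
  shows "c *\<^sub>C u \<in> H_Psi I \<psi>"
proof -
  obtain a where a: "\<forall>n. a n \<in> dom_C I \<psi>" "a \<longlonglongrightarrow> u" using assms(1) unfolding H_Psi_def closure_sequential by blast
  have "\<forall>n. c *\<^sub>C a n \<in> dom_C I \<psi>" using a dom_C_scale by blast
  moreover have "(\<lambda>n. c *\<^sub>C a n) \<longlonglongrightarrow> c *\<^sub>C u" using a by (intro scaleC_tendsto) auto
  ultimately show ?thesis unfolding H_Psi_def closure_sequential
    by (intro exI[where x="\<lambda>n. c *\<^sub>C a n"]) simp
qed

lemma dom_C_sub_H: "f \<in> dom_C I \<psi> \<Longrightarrow> f \<in> H_Psi I \<psi>"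
  unfolding H_Psi_def using closure_subset by blast

lemma orth_proj_props:
  fixes \<psi> :: "'i \<Rightarrow> 'a::{complex_inner,complete_space}"
  shows "orth_proj (H_Psi I \<psi>) x \<in> H_Psi I \<psi> \<and>
     (\<forall>z\<in>H_Psi I \<psi>. cinner (x - orth_proj (H_Psi I \<psi>) x) z = 0)"
proof -
  let ?H = "H_Psi I \<psi>"
  let ?P = "\<lambda>y. y \<in> ?H \<and> (\<forall>z\<in>?H. cinner (x - y) z = 0)"
  have "\<exists>y\<in>?H. \<forall>v\<in>?H. cinner v y = cinner v x"
  proof (rule abstract_riesz[where A=1])
    show "u + v \<in> ?H" if "u \<in> ?H" "v \<in> ?H" for u v using that by (rule H_Psi_add)
    show "a *\<^sub>C u \<in> ?H" if "u \<in> ?H" for a u using that by (rule H_Psi_scale)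
    show "?H \<noteq> {}" using dom_C_sub_H[OF dom_C_zero] by blast
    show "cinner (u + v) w = cinner u w + cinner v w" for u v w by (rule cinner_add_left)
    show "cinner (a *\<^sub>C u) w = a * cinner u w" for a u w by (rule cinner_scaleC_left)
    show "cinner u w = cnj (cinner w u)" for u w by (rule cinner_commute)
    show "(0::real) < 1" by simp
    show "1 * (norm u)^2 \<le> Re (cinner u u)" for u by (simp add: Re_cinner_self)
    show "\<exists>z\<in>?H. (\<lambda>n. Re (cinner (y n - z) (y n - z))) \<longlonglongrightarrow> 0"
      if yH: "\<And>n. y n \<in> ?H"
        and cy: "\<And>e. e>0 \<Longrightarrow> \<exists>N. \<forall>m\<ge>N. \<forall>n\<ge>N. Re (cinner (y m - y n) (y m - y n)) < e" for y
    proof -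
      have "Cauchy y"
      proof (rule metric_CauchyI)
        fix e :: real assume e: "e > 0"
        have "e^2 > 0" using e by simp
        from cy[OF this] obtain N where N: "\<forall>m\<ge>N. \<forall>n\<ge>N. Re (cinner (y m - y n) (y m - y n)) < e^2" by blast
        show "\<exists>M. \<forall>m\<ge>M. \<forall>n\<ge>M. dist (y m) (y n) < e"
        proof (intro exI allI impI)
          fix m n assume mn: "m \<ge> N" "n \<ge> N"
          have "(norm (y m - y n))^2 < e^2" using N mn by (simp add: Re_cinner_self)
          then have "norm (y m - y n) < e" by (rule power_less_imp_less_base) (use e in simp)
          then show "dist (y m) (y n) < e" by (simp add: dist_norm)
        qed
      qed
      then obtain z where yz: "y \<longlonglongrightarrow> z" using Cauchy_convergent_iff convergent_def by blast
      have zH: "z \<in> ?H"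
        using yH yz closed_sequential_limits[of ?H] unfolding H_Psi_def by auto
      have "(\<lambda>n. norm (y n - z)) \<longlonglongrightarrow> 0" using yz tendsto_norm_zero LIM_zero by blast
      then have "(\<lambda>n. (norm (y n - z))^2) \<longlonglongrightarrow> 0" using tendsto_power[of _ 0 sequentially 2] by force
      then have "(\<lambda>n. Re (cinner (y n - z) (y n - z))) \<longlonglongrightarrow> 0" by (simp add: Re_cinner_self)
      with zH show ?thesis by blast
    qed
  qed
  then obtain y where yH: "y \<in> ?H" and yv: "\<forall>v\<in>?H. cinner v y = cinner v x" by blast
  have Py: "?P y"
  proof (intro conjI ballI yH)
    fix z assume "z \<in> ?H"
    then have "cinner z (x - y) = 0" using yv by (simp add: cinner_diff_right)
    then show "cinner (x - y) z = 0" by (metis cinner_commute complex_cnj_zero)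
  qed
  have uniq: "y' = y" if "?P y'" for y'
  proof -
    have d: "y - y' \<in> ?H" using H_Psi_add[OF yH H_Psi_scale[of y' I \<psi> "-1"]] that
      by (simp add: scaleC_minus1)
    have "cinner (x - y') (y - y') = 0" "cinner (x - y) (y - y') = 0" using that Py d by auto
    moreover have e: "(x - y') - (x - y) = y - y'" by (simp add: algebra_simps)
    ultimately have "cinner (y - y') (y - y') = 0"
      using cinner_diff_left[of "x - y'" "x - y" "y - y'"] unfolding e by simp
    then show ?thesis by (simp add: cinner_self_zero)
  qed
  have "\<exists>!y. ?P y" using Py uniq by blast
  then have "?P (THE y. ?P y)" by (rule theI')
  then show ?thesis unfolding orth_proj_def .
qed


lemma ennreal_infsum_summable:
  assumes "f summable_on I" "\<And>i. i \<in> I \<Longrightarrow> f i \<ge> 0"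
  shows "(\<Sum>\<^sub>\<infinity>i\<in>I. ennreal (f i)) = ennreal (\<Sum>\<^sub>\<infinity>i\<in>I. f i)"
proof -
  have "infsum (ennreal \<circ> f) I = ennreal (infsum f I)"
  proof (rule infsum_comm_additive_general)
    show "sum (ennreal \<circ> f) F = ennreal (sum f F)" if "finite F" "F \<subseteq> I" for F
      using that assms(2) by (auto intro!: sum_ennreal)
  qed (use assms(1) in auto)
  then show ?thesis by (simp add: o_def)
qed

lemma ennreal_infsum_not_summable:
  assumes "\<not> f summable_on I" "\<And>i. i \<in> I \<Longrightarrow> f i \<ge> 0"
  shows "(\<Sum>\<^sub>\<infinity>i\<in>I. ennreal (f i)) = top"
proof (rule ccontr)
  assume ne: "(\<Sum>\<^sub>\<infinity>i\<in>I. ennreal (f i)) \<noteq> top"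
  define S where "S = (\<Sum>\<^sub>\<infinity>i\<in>I. ennreal (f i))"
  have St: "S < top" using ne unfolding S_def by (simp add: top.not_eq_extremum)
  have "sum f F \<le> enn2real S" if F: "finite F" "F \<subseteq> I" for F
  proof -
    have "ennreal (sum f F) = (\<Sum>i\<in>F. ennreal (f i))"
      using F assms(2) by (auto intro!: sum_ennreal[symmetric])
    also have "\<dots> \<le> S"
    proof -
      have "S = (SUP F\<in>{F. finite F \<and> F \<subseteq> I}. sum (\<lambda>i. ennreal (f i)) F)"
        unfolding S_def by (rule nonneg_infsum_complete) simp
      then show ?thesis using F by (auto intro: SUP_upper)
    qed
    also have "\<dots> = ennreal (enn2real S)" using St by simp
    finally have "ennreal (sum f F) \<le> ennreal (enn2real S)" .
    then show ?thesis using enn2real_nonneg[of S] unfolding ennreal_le_iff2 by linarith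
  qed
  then have "f summable_on I"
    by (intro nonneg_bdd_above_summable_on bdd_aboveI2[where M="enn2real S"]) (auto simp: assms(2))
  with assms(1) show False by contradiction
qed

lemma cmod_diff_sq: "(cmod (x - y))^2 = (cmod x)^2 + (cmod y)^2 - 2 * Re (x * cnj y)"
  by (simp only: cmod_power2) (simp add: power2_eq_square algebra_simps)

lemma gen_rel_iff:
  "gen_frame_op_rel I \<psi> f u \<longleftrightarrow> f \<in> dom_C I \<psi> \<and> u \<in> H_Psi I \<psi> \<and> (\<forall>g\<in>dom_C I \<psi>. BB I \<psi> g f = cinner g u)"
  unfolding gen_frame_op_rel_def adjC_rel_def l2_def l2_inner_def BB_def dom_C_def by auto

lemma BB_diff: "u \<in> dom_C I \<psi> \<Longrightarrow> v \<in> dom_C I \<psi> \<Longrightarrow> w \<in> dom_C I \<psi> \<Longrightarrow>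
   BB I \<psi> (u - v) w = BB I \<psi> u w - BB I \<psi> v w"
  using BB_add[of u I \<psi> "(-1) *\<^sub>C v" w] BB_scale[of v I \<psi> w "-1"] dom_C_scale[of v I \<psi> "-1"]
  by (simp add: scaleC_minus1)

lemma BB_diff_right: "u \<in> dom_C I \<psi> \<Longrightarrow> v \<in> dom_C I \<psi> \<Longrightarrow> w \<in> dom_C I \<psi> \<Longrightarrow>
   BB I \<psi> w (u - v) = BB I \<psi> w u - BB I \<psi> w v"
  by (metis BB_diff BB_herm complex_cnj_diff)

lemma gamma_ex1:
  fixes \<psi> :: "'i \<Rightarrow> 'a::{complex_inner,complete_space}"
  assumes lfs: "lower_frame_seq I \<psi>" and u: "u \<in> H_Psi I \<psi>"
  shows "\<exists>!f. gen_frame_op_rel I \<psi> f u"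
proof -
  obtain A where A: "A > 0" and lb: "\<And>f. f \<in> dom_C I \<psi> \<Longrightarrow> A * (norm f)^2 \<le> (\<Sum>\<^sub>\<infinity>i\<in>I. (cmod (cinner f (\<psi> i)))^2)"
    using lfs unfolding lower_frame_seq_def by blast
  have "\<exists>f\<in>dom_C I \<psi>. \<forall>g\<in>dom_C I \<psi>. BB I \<psi> g f = cinner g u"
  proof (rule abstract_riesz[where A=A])
    show "u + v \<in> dom_C I \<psi>" if "u \<in> dom_C I \<psi>" "v \<in> dom_C I \<psi>" for u v using that by (rule dom_C_add)
    show "a *\<^sub>C u \<in> dom_C I \<psi>" if "u \<in> dom_C I \<psi>" for a u using that by (rule dom_C_scale)
    show "dom_C I \<psi> \<noteq> {}" using dom_C_zero by blast
    show "BB I \<psi> (u + v) w = BB I \<psi> u w + BB I \<psi> v w"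
      if "u \<in> dom_C I \<psi>" "v \<in> dom_C I \<psi>" "w \<in> dom_C I \<psi>" for u v w using that by (rule BB_add)
    show "BB I \<psi> (a *\<^sub>C u) w = a * BB I \<psi> u w"
      if "u \<in> dom_C I \<psi>" "w \<in> dom_C I \<psi>" for a u w using that by (rule BB_scale)
    show "BB I \<psi> u w = cnj (BB I \<psi> w u)" for u w by (rule BB_herm)
    show "0 < A" by (rule A)
    show "A * (norm u)^2 \<le> Re (BB I \<psi> u u)" if "u \<in> dom_C I \<psi>" for u
      using lb[OF that] Re_BB_self[OF that] by simp
    show "\<exists>z\<in>dom_C I \<psi>. (\<lambda>n. Re (BB I \<psi> (y n - z) (y n - z))) \<longlonglongrightarrow> 0"
      if "\<And>n. y n \<in> dom_C I \<psi>"
        "\<And>e. e>0 \<Longrightarrow> \<exists>N. \<forall>m\<ge>N. \<forall>n\<ge>N. Re (BB I \<psi> (y m - y n) (y m - y n)) < e" for y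
      by (rule dom_C_complete[OF A lb that])
  qed
  then obtain f where fD: "f \<in> dom_C I \<psi>" and fB: "\<forall>g\<in>dom_C I \<psi>. BB I \<psi> g f = cinner g u" by blast
  have ex: "gen_frame_op_rel I \<psi> f u" using fD fB u by (simp add: gen_rel_iff)
  have uniq: "f' = f" if "gen_frame_op_rel I \<psi> f' u" for f'
  proof -
    have f'D: "f' \<in> dom_C I \<psi>" and f'B: "\<forall>g\<in>dom_C I \<psi>. BB I \<psi> g f' = cinner g u"
      using that by (simp_all add: gen_rel_iff)
    define d where "d = f' - f"
    have dD: "d \<in> dom_C I \<psi>" unfolding d_def using dom_C_diff[OF f'D fD] .
    have "BB I \<psi> d d = BB I \<psi> d f' - BB I \<psi> d f"
      unfolding d_def[of] using BB_diff_right[OF f'D fD dD] by (simp add: d_def)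
    also have "\<dots> = 0" using f'B fB dD by simp
    finally have "Re (BB I \<psi> d d) = 0" by simp
    then have "A * (norm d)^2 \<le> 0" using lb[OF dD] Re_BB_self[OF dD] by simp
    then have "norm d = 0" using A by (simp add: mult_le_0_iff)
    then show ?thesis unfolding d_def by simp
  qed
  show ?thesis using ex uniq by blast
qed


theorem lemma6p13:
  fixes I :: "'i set" and \<psi> :: "'i \<Rightarrow> 'a::{complex_inner, complete_space}"
    and h :: 'a and c :: "'i \<Rightarrow> complex"
  assumes separable: "\<exists>D::'a set. countable D \<and> closure D = UNIV"
    and countI: "countable I"
    and lfs: "lower_frame_seq I \<psi>"
    and weak_rep: "\<forall>g\<in>dom_C I \<psi>. ((\<lambda>i. c i * cinner (\<psi> i) g) has_sum cinner h g) I"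
  shows "(\<Sum>\<^sub>\<infinity>i\<in>I. ennreal ((cmod (c i))\<^sup>2)) =
           (\<Sum>\<^sub>\<infinity>i\<in>I. ennreal ((cmod (cinner h (canonical_dual I \<psi> i)))\<^sup>2))
         + (\<Sum>\<^sub>\<infinity>i\<in>I. ennreal ((cmod (c i - cinner h (canonical_dual I \<psi> i)))\<^sup>2))
     \<and> (\<Sum>\<^sub>\<infinity>i\<in>I. ennreal ((cmod (cinner h (canonical_dual I \<psi> i)))\<^sup>2))
         \<le> (\<Sum>\<^sub>\<infinity>i\<in>I. ennreal ((cmod (c i))\<^sup>2))"
proof -
  let ?H = "H_Psi I \<psi>"
  let ?P = "orth_proj ?H"
  have Pprops: "?P x \<in> ?H \<and> (\<forall>z\<in>?H. cinner (x - ?P x) z = 0)" for x by (rule orth_proj_props)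
  have dual_rel: "gen_frame_op_rel I \<psi> (canonical_dual I \<psi> i) (?P (\<psi> i))" for i
  proof -
    have "\<exists>!f. gen_frame_op_rel I \<psi> f (?P (\<psi> i))" using gamma_ex1[OF lfs] Pprops by blast
    then show ?thesis unfolding canonical_dual_def by (rule theI')
  qed
  have "\<exists>!f. gen_frame_op_rel I \<psi> f (?P h)" using gamma_ex1[OF lfs] Pprops by blast
  then obtain f where frel: "gen_frame_op_rel I \<psi> f (?P h)" by blast
  have fD: "f \<in> dom_C I \<psi>" and fB: "\<forall>g\<in>dom_C I \<psi>. BB I \<psi> g f = cinner g (?P h)"
    using frel by (simp_all add: gen_rel_iff)
  have dD: "canonical_dual I \<psi> i \<in> dom_C I \<psi>"
    and dB: "\<forall>g\<in>dom_C I \<psi>. BB I \<psi> g (canonical_dual I \<psi> i) = cinner g (?P (\<psi> i))" for i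
    using dual_rel[of i] by (simp_all add: gen_rel_iff)
  have fH: "f \<in> ?H" by (rule dom_C_sub_H[OF fD])
  have dH: "canonical_dual I \<psi> i \<in> ?H" for i using dom_C_sub_H[OF dD] .
  define d where "d i = cinner f (\<psi> i)" for i
  have coef: "cinner h (canonical_dual I \<psi> i) = d i" for i
  proof -
    have o1: "cinner (h - ?P h) (canonical_dual I \<psi> i) = 0" using Pprops[of h] dH by blast
    have o2: "cinner (\<psi> i - ?P (\<psi> i)) f = 0" using Pprops[of "\<psi> i"] fH by blast
    have o3: "cinner f (\<psi> i - ?P (\<psi> i)) = 0" using o2 by (metis cinner_commute complex_cnj_zero)
    have "cinner h (canonical_dual I \<psi> i) = cinner (?P h) (canonical_dual I \<psi> i) + cinner (h - ?P h) (canonical_dual I \<psi> i)"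
      by (simp add: cinner_diff_left)
    also have "\<dots> = cinner (?P h) (canonical_dual I \<psi> i)" using o1 by simp
    also have "\<dots> = cnj (cinner (canonical_dual I \<psi> i) (?P h))" by (rule cinner_commute)
    also have "\<dots> = cnj (BB I \<psi> (canonical_dual I \<psi> i) f)" using fB dD by simp
    also have "\<dots> = BB I \<psi> f (canonical_dual I \<psi> i)" using BB_herm[of I \<psi> f "canonical_dual I \<psi> i"] by simp
    also have "\<dots> = cinner f (?P (\<psi> i))" using dB fD by simp
    also have "\<dots> = cinner f (\<psi> i) - cinner f (\<psi> i - ?P (\<psi> i))" by (simp add: cinner_diff_right)
    also have "\<dots> = d i" using o3 by (simp add: d_def)
    finally show ?thesis .
  qed
  define a where "a i = (cmod (c i))^2" for i
  define b where "b i = (cmod (d i))^2" for i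
  define e where "e i = (cmod (c i - d i))^2" for i
  have bs: "b summable_on I" using fD unfolding dom_C_def b_def d_def by simp
  have cross: "((\<lambda>i. c i * cnj (d i)) has_sum cinner h f) I"
  proof -
    have "(\<lambda>i. c i * cinner (\<psi> i) f) = (\<lambda>i. c i * cnj (d i))"
    proof (rule ext)
      fix i show "c i * cinner (\<psi> i) f = c i * cnj (d i)"
        unfolding d_def using cinner_commute[of "\<psi> i" f] by simp
    qed
    then show ?thesis using weak_rep fD by metis
  qed
  have bnorm: "(\<Sum>\<^sub>\<infinity>i\<in>I. b i) = Re (cinner h f)"
  proof -
    have o4: "cinner f (h - ?P h) = 0"
      using Pprops[of h] fH by (metis cinner_commute complex_cnj_zero)
    have "(\<Sum>\<^sub>\<infinity>i\<in>I. b i) = Re (BB I \<psi> f f)" unfolding b_def d_def using Re_BB_self[OF fD] by simp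
    also have "\<dots> = Re (cinner f (?P h))" using fB fD by simp
    also have "\<dots> = Re (cinner f h)" using o4 by (simp add: cinner_diff_right)
    also have "\<dots> = Re (cinner h f)" by (rule Re_cinner_swap)
    finally show ?thesis .
  qed
  have bsum: "(b has_sum Re (cinner h f)) I" using bs bnorm has_sum_infsum by force
  have crossRe: "((\<lambda>i. Re (c i * cnj (d i))) has_sum Re (cinner h f)) I" using has_sum_Re[OF cross] .
  have ann: "a i \<ge> 0" "b i \<ge> 0" "e i \<ge> 0" for i unfolding a_def b_def e_def by simp_all
  have eq_e: "e i = a i + b i + (-2) * Re (c i * cnj (d i))" for i
    unfolding a_def b_def e_def by (simp add: cmod_diff_sq)
  have EQ: "(\<Sum>\<^sub>\<infinity>i\<in>I. ennreal (a i)) = (\<Sum>\<^sub>\<infinity>i\<in>I. ennreal (b i)) + (\<Sum>\<^sub>\<infinity>i\<in>I. ennreal (e i))"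
  proof (cases "a summable_on I")
    case True
    have "((\<lambda>i. a i + b i + (-2) * Re (c i * cnj (d i))) has_sum
          (infsum a I + Re (cinner h f) + (-2) * Re (cinner h f))) I"
      by (intro has_sum_add has_sum_cmult_right has_sum_infsum True bsum crossRe)
    moreover have fe: "(\<lambda>i. a i + b i + (-2) * Re (c i * cnj (d i))) = e"
      by (rule ext) (simp only: eq_e)
    moreover have "infsum a I + Re (cinner h f) + (-2) * Re (cinner h f) = infsum a I - infsum b I"
      using bnorm by simp
    ultimately have esum: "(e has_sum (infsum a I - infsum b I)) I" by simp
    have es: "e summable_on I" using esum summable_on_def by blast
    have einf: "infsum e I = infsum a I - infsum b I" using esum by (rule infsumI)
    have "(\<Sum>\<^sub>\<infinity>i\<in>I. ennreal (a i)) = ennreal (infsum a I)"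
      using True ann by (intro ennreal_infsum_summable) auto
    moreover have "(\<Sum>\<^sub>\<infinity>i\<in>I. ennreal (b i)) = ennreal (infsum b I)"
      using bs ann by (intro ennreal_infsum_summable) auto
    moreover have "(\<Sum>\<^sub>\<infinity>i\<in>I. ennreal (e i)) = ennreal (infsum e I)"
      using es ann by (intro ennreal_infsum_summable) auto
    moreover have "infsum b I \<ge> 0" using ann by (intro infsum_nonneg) auto
    moreover have "infsum e I \<ge> 0" using ann by (intro infsum_nonneg) auto
    ultimately show ?thesis using einf by (simp flip: ennreal_plus)
  next
    case False
    have ne: "\<not> e summable_on I"
    proof
      assume es: "e summable_on I"
      have "(\<lambda>i. 2 * b i + 2 * e i) summable_on I"
        by (intro summable_on_add summable_on_cmult_right bs es)
      moreover have "a i \<le> 2 * b i + 2 * e i" for i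
        using cmod_add_sq[of "d i" "c i - d i"] unfolding a_def b_def e_def by simp
      ultimately have "a summable_on I"
        by (rule summable_on_comparison_test) (simp add: ann)
      with False show False by contradiction
    qed
    have "(\<Sum>\<^sub>\<infinity>i\<in>I. ennreal (a i)) = top" using False ann by (intro ennreal_infsum_not_summable) auto
    moreover have "(\<Sum>\<^sub>\<infinity>i\<in>I. ennreal (e i)) = top" using ne ann by (intro ennreal_infsum_not_summable) auto
    ultimately show ?thesis by simp
  qed
  have LE: "(\<Sum>\<^sub>\<infinity>i\<in>I. ennreal (b i)) \<le> (\<Sum>\<^sub>\<infinity>i\<in>I. ennreal (a i))"
    using EQ le_iff_add by blast
  show ?thesis using EQ LE unfolding coef a_def b_def e_def by simp
qed

end
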